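(* Let $m,n$ be integers with $mn\neq0$ and let $K=J(2m,2n)$, with knot group $\pi_1(K)=\langle a,b\mid w^na=bw^n\rangle$, where $a,b$ are meridians and $w=(ba^{-1})^m(b^{-1}a)^m$. Let $s\neq0$ and $y\neq 2$ be complex numbers such that $\rho(a)=\begin{bmatrix}s&1\\0&s^{-1}\end{bmatrix}$, $\rho(b)=\begin{bmatrix}s&0\\2-y&s^{-1}\end{bmatrix}$ defines a representation $\rho:\pi_1(K)\to SL_2(\mathbb C)$ (equivalently $s,y$ satisfy the Riley equation $\phi_K(s,y)=0$). Let $\lambda=\overleftarrow{w}^nw^n$ be the canonical longitude corresponding to the meridian $a$, where $\overleftarrow{w}$ is the word $w$ written in reverse order. Then $$\operatorname{tr}\rho(\lambda)=2-\frac{(s+s^{-1})^2(y-2)^2S_{m-1}^2(y)}{2-s^2-s^{-2}+(y-s^2-s^{-2})(y-2)S_{m-1}^2(y)}.$$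
   Context: $S_k(v)$ denotes the Chebyshev polynomials of the second kind, defined for all integers $k$ by $S_0(v)=1$, $S_1(v)=v$, $S_k(v)=vS_{k-1}(v)-S_{k-2}(v)$. Explicitly, the Riley polynomial is $\phi_K(s,y)=S_n(z)-\big\{1+(y-s^2-s^{-2})S_{m-1}(y)(S_m(y)-S_{m-1}(y))\big\}S_{n-1}(z)$ with $z=2+(y-2)(y-s^2-s^{-2})S_{m-1}^2(y)=\operatorname{tr}\rho(w)$. *)

theory Defs
  imports "HOL-Analysis.Analysis"
begin

type_synonym cmat = "complex^2^2"

text \<open>Chebyshev polynomials of the second kind, S_0 = 1, S_1 = v,
  S_k = v S_(k-1) - S_(k-2), extended to all integers k via the same recurrence.\<close>
fun chebS_nat :: "nat \<Rightarrow> complex \<Rightarrow> complex" where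
  "chebS_nat 0 v = 1"
| "chebS_nat (Suc 0) v = v"
| "chebS_nat (Suc (Suc k)) v = v * chebS_nat (Suc k) v - chebS_nat k v"

definition chebS :: "int \<Rightarrow> complex \<Rightarrow> complex" where
  "chebS k v = (if 0 \<le> k then chebS_nat (nat k) v
                else if k = -1 then 0 else - chebS_nat (nat (-k - 2)) v)"

fun mpow :: "cmat \<Rightarrow> nat \<Rightarrow> cmat" where
  "mpow M 0 = mat 1"
| "mpow M (Suc k) = M ** mpow M k"

definition zpow :: "cmat \<Rightarrow> int \<Rightarrow> cmat" where
  "zpow M k = (if 0 \<le> k then mpow M (nat k) else mpow (matrix_inv M) (nat (-k)))"

definition rhoA :: "complex \<Rightarrow> cmat" where
  "rhoA s = vector [vector [s, 1], vector [0, inverse s]]"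

definition rhoB :: "complex \<Rightarrow> complex \<Rightarrow> cmat" where
  "rhoB s y = vector [vector [s, 0], vector [2 - y, inverse s]]"

definition rhoW :: "int \<Rightarrow> complex \<Rightarrow> complex \<Rightarrow> cmat" where
  "rhoW m s y = zpow (rhoB s y ** matrix_inv (rhoA s)) m
               ** zpow (matrix_inv (rhoB s y) ** rhoA s) m"

definition rhoWrev :: "int \<Rightarrow> complex \<Rightarrow> complex \<Rightarrow> cmat" where
  "rhoWrev m s y = zpow (rhoA s ** matrix_inv (rhoB s y)) m
                  ** zpow (matrix_inv (rhoA s) ** rhoB s y) m"

definition rhoLambda :: "int \<Rightarrow> int \<Rightarrow> complex \<Rightarrow> complex \<Rightarrow> cmat" where
  "rhoLambda m n s y = zpow (rhoWrev m s y) n ** zpow (rhoW m s y) n"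

end

theory Submission
  imports Defs
begin


definition mk :: "complex \<Rightarrow> complex \<Rightarrow> complex \<Rightarrow> complex \<Rightarrow> cmat" where
  "mk a b c d = vector [vector [a,b], vector [c,d]]"

lemma mk_nth[simp]: "mk a b c d $ 1 $ 1 = a" "mk a b c d $ 1 $ 2 = b"
  "mk a b c d $ 2 $ 1 = c" "mk a b c d $ 2 $ 2 = d"
  by (simp_all add: mk_def)

lemma mk_eta: "M = mk (M$1$1) (M$1$2) (M$2$1) (M$2$2)"
  by (simp add: vec_eq_iff forall_2)

lemma mk_eq_iff: "mk a b c d = mk a' b' c' d' \<longleftrightarrow> a = a' \<and> b = b' \<and> c = c' \<and> d = d'"
  by (metis mk_nth)

lemma mk_mult: "mk a b c d ** mk e f g h = mk (a * e+b * g) (a * f+b * h) (c * e+d * g) (c * f+d * h)"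
  by (simp add: vec_eq_iff forall_2 matrix_matrix_mult_def sum_2)

lemma mk_one: "mat 1 = mk 1 0 0 1"
  by (simp add: vec_eq_iff forall_2 mat_def)

lemma mk_trace: "trace (mk a b c d) = a + d"
  by (simp add: trace_def sum_2)

lemma mk_det: "det (mk a b c d) = a * d - b * c"
  by (simp add: det_2)

lemma mk_inv: assumes "a * d - b * c = 1" shows "matrix_inv (mk a b c d) = mk d (-b) (-c) a"
proof -
  let ?M = "mk a b c d" and ?N = "mk d (-b) (-c) a"
  have 1: "?M ** ?N = mat 1" "?N ** ?M = mat 1" using assms
    by (simp_all add: mk_mult mk_one mk_eq_iff algebra_simps)
  hence ex: "\<exists>A'. ?M ** A' = mat 1 \<and> A' ** ?M = mat 1" by blast
  define I where "I = matrix_inv ?M"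
  have "?M ** I = mat 1 \<and> I ** ?M = mat 1"
    unfolding I_def matrix_inv_def by (rule someI_ex[OF ex])
  hence "I = I ** (?M ** ?N)" using 1 by (simp add: matrix_mul_rid)
  also have "\<dots> = (I ** ?M) ** ?N" by (simp add: matrix_mul_assoc)
  also have "\<dots> = ?N" using \<open>?M ** I = mat 1 \<and> I ** ?M = mat 1\<close> by (simp add: matrix_mul_lid)
  finally show ?thesis unfolding I_def .
qed



lemma chebS_nat_rec: "chebS_nat (Suc (Suc k)) v = v * chebS_nat (Suc k) v - chebS_nat k v" by simp

lemma chebS_rec: "chebS (k + 1) v = v * chebS k v - chebS (k - 1) v"
proof -
  consider "k \<ge> 1" | "k = 0" | "k = -1" | "k = -2" | "k \<le> -3" by linarith
  then show ?thesis
  proof cases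
    case 1
    then obtain j where j: "k = int j + 1" using nat_int[of "nat (k - 1)"] by (intro that[of "nat (k-1)"]) simp
    have "nat (k+1) = Suc (Suc j)" "nat k = Suc j" "nat (k - 1) = j" using j by auto
    then show ?thesis using 1 by (simp add: chebS_def)
  next
    case 2 then show ?thesis by (simp add: chebS_def)
  next
    case 3 then show ?thesis by (simp add: chebS_def)
  next
    case 4 then show ?thesis by (simp add: chebS_def)
  next
    case 5
    then obtain j where j: "k = - int j - 3" by (intro that[of "nat (-k-3)"]) simp
    have "nat (-(k+1) - 2) = j" "nat (-k-2) = Suc j" "nat (-(k - 1) - 2) = Suc (Suc j)" using j by auto
    then show ?thesis using 5 by (simp add: chebS_def)
  qed
qed

lemma chebS_rec': "chebS k v = v * chebS (k - 1) v - chebS (k - 2) v"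
  using chebS_rec[of "k - 1" v] by simp

lemma chebS_neg: "chebS (- k) v = - chebS (k - 2) v"
proof -
  consider "k \<ge> 2" | "k = 1" | "k = 0" | "k \<le> -1" by linarith
  then show ?thesis
  proof cases
    case 1 then show ?thesis by (simp add: chebS_def)
  next
    case 2 then show ?thesis by (simp add: chebS_def)
  next
    case 3 then show ?thesis by (simp add: chebS_def)
  next
    case 4
    then show ?thesis by (cases "k = -1") (auto simp: chebS_def)
  qed
qed

lemma cass_aux1: "(a::complex)^2 - v * a * b + b^2 = 1 \<Longrightarrow> c = v * a - b \<Longrightarrow> c^2 - v * c * a + a^2 = 1"
  by algebra
lemma cass_aux2: "(a::complex)^2 - v * a * b + b^2 = 1 \<Longrightarrow> a = v * b - c \<Longrightarrow> b^2 - v * b * c + c^2 = 1"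
  by algebra

lemma chebS_cassini: "(chebS k v)^2 - v * chebS k v * chebS (k - 1) v + (chebS (k - 1) v)^2 = 1"
proof (induction k rule: int_induct[where k = 0])
  case base then show ?case by (simp add: chebS_def)
next
  case (step1 i)
  then show ?case using cass_aux1[OF step1(2) chebS_rec[of i v]] by simp
next
  case (step2 i)
  then show ?case using cass_aux2[OF step2(2) chebS_rec'[of i v]] by simp
qed



definition lin :: "complex \<Rightarrow> complex \<Rightarrow> cmat \<Rightarrow> cmat" where
  "lin a b M = mk (a * M$1$1 - b) (a * M$1$2) (a * M$2$1) (a * M$2$2 - b)"

lemma lin_mk: "lin a b (mk p q r w) = mk (a * p - b) (a * q) (a * r) (a * w - b)"
  by (simp add: lin_def)

lemma step_aux: assumes "p * w - q * r = 1"
  shows "mk p q r w ** lin a b (mk p q r w) = lin ((p+w) * a - b) a (mk p q r w)"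
  unfolding lin_mk mk_mult mk_eq_iff using assms by algebra

lemma mpow_cheb: assumes "det M = 1"
  shows "mpow M k = lin (chebS (int k - 1) (trace M)) (chebS (int k - 2) (trace M)) M"
proof -
  obtain p q r w where M: "M = mk p q r w" by (metis mk_eta)
  have d: "p * w - q * r = 1" using assms by (simp add: M mk_det)
  show ?thesis
  proof (induction k)
    case 0
    then show ?case by (simp add: M lin_mk mk_one chebS_def)
  next
    case (Suc k)
    have "mpow M (Suc k) = M ** mpow M k" by simp
    also have "\<dots> = lin ((p+w) * chebS (int k - 1) (trace M) - chebS (int k - 2) (trace M))
                    (chebS (int k - 1) (trace M)) M"
      using Suc by (simp add: M step_aux[OF d])
    also have "(p+w) * chebS (int k - 1) (trace M) - chebS (int k - 2) (trace M) = chebS (int (Suc k) - 1) (trace M)"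
      using chebS_rec'[of "int k" "trace M"] by (simp add: M mk_trace)
    finally show ?case by simp
  qed
qed

lemma zpow_cheb: assumes "det M = 1"
  shows "zpow M k = lin (chebS (k - 1) (trace M)) (chebS (k - 2) (trace M)) M"
proof (cases "0 \<le> k")
  case True
  then show ?thesis by (simp add: zpow_def mpow_cheb[OF assms])
next
  case False
  obtain p q r w where M: "M = mk p q r w" by (metis mk_eta)
  have d: "p * w - q * r = 1" using assms by (simp add: M mk_det)
  have inv: "matrix_inv M = mk w (-q) (-r) p" using mk_inv[OF d] M by simp
  have dinv: "det (matrix_inv M) = 1" using d by (simp add: inv mk_det algebra_simps)
  define j where "j = -k"
  have kj: "k = -j" and nj: "int (nat (-k)) = j" using False by (auto simp: j_def)
  have t: "trace (matrix_inv M) = trace M" unfolding inv by (simp add: M mk_trace)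
  have k1: "k - 1 = -(j+1)" "k - 2 = -(j+2)" by (simp_all add: kj)
  have e1: "chebS (k - 1) (p+w) = - chebS (j - 1) (p+w)"
    unfolding k1 chebS_neg by simp
  have e2: "chebS (k - 2) (p+w) = - ((p+w) * chebS (j - 1) (p+w) - chebS (j - 2) (p+w))"
    unfolding k1 chebS_neg using chebS_rec'[of j "p+w"] by simp
  have P: "mpow (matrix_inv M) (nat (-k)) = lin (chebS (j-1) (trace M)) (chebS (j-2) (trace M)) (matrix_inv M)"
    using mpow_cheb[OF dinv, of "nat (-k)"] nj t by simp
  have Q: "zpow M k = lin (chebS (j-1) (trace M)) (chebS (j-2) (trace M)) (matrix_inv M)"
    using False P by (simp add: zpow_def)
  show ?thesis unfolding Q inv
    by (simp add: inv M mk_trace lin_mk e1 e2 mk_eq_iff algebra_simps)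
qed



lemma alg:
  fixes s t y S R p q r w p' q' r' w' :: complex
  assumes st: "s * t = 1" and C: "S^2 - y * S * R + R^2 = 1"
    and p: "p = R^2 + (-2) * S * R + S^2 + (2) * s^2 * S^2 - s^2 * y * S^2"
    and q: "q = -t * S * R + t * S^2 + s * S * R + s * S^2 - s * y * S^2"
    and r: "r = (-2) * t * S * R + (2) * t * S^2 + t * y * S * R - t * y * S^2 + (2) * s * S * R + (2) * s * S^2 - s * y * S * R + (-3) * s * y * S^2 + s * y^2 * S^2"
    and w: "w = R^2 + (2) * S * R + S^2 + (-2) * y * S * R + (-2) * y * S^2 + y^2 * S^2 + (2) * t^2 * S^2 - t^2 * y * S^2"
    and p': "p' = R^2 + (2) * S * R + S^2 + (-2) * y * S * R + (-2) * y * S^2 + y^2 * S^2 + (2) * s^2 * S^2 - s^2 * y * S^2"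
    and q': "q' = t * S * R + t * S^2 - t * y * S^2 - s * S * R + s * S^2"
    and r': "r' = (2) * t * S * R + (2) * t * S^2 - t * y * S * R + (-3) * t * y * S^2 + t * y^2 * S^2 + (-2) * s * S * R + (2) * s * S^2 + s * y * S * R - s * y * S^2"
    and w': "w' = R^2 + (-2) * S * R + S^2 + (2) * t^2 * S^2 - t^2 * y * S^2"
  shows "p + q * (t - s) = 1 + (s^2 + t^2 - y) * S * (S - R)" (is ?e)
    and "p + w = 2 + (y-2) * (y - (s^2+t^2)) * S^2" (is ?z)
    and "p' + w' = p + w" (is ?z')
    and "p' * p + q' * r + r' * q + w' * w = 2 - (y - (s^2+t^2)) * S^2 * ((s^2+t^2+2) * (y-2)^2 * S^2)" (is ?T)
proof -
  show ?e unfolding p q using st C by algebra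
  show ?z unfolding p w using st C by algebra
  show ?z' unfolding p w p' w' by (simp add: algebra_simps)
  show ?T unfolding p q r w p' q' r' w' using st C by algebra
qed


lemma det_lin: assumes "det M = 1"
  shows "det (lin a b M) = a^2 - a * b * trace M + b^2"
proof -
  obtain p q r w where M: "M = mk p q r w" by (metis mk_eta)
  show ?thesis using assms unfolding M lin_mk mk_det mk_trace by algebra
qed

lemma trace_lin: "trace (lin a b (mk p' q' r' w') ** lin a b (mk p q r w)) =
   (a * p' - b) * (a * p - b) + (a * q') * (a * r) + (a * r') * (a * q) + (a * w' - b) * (a * w - b)"
  by (simp add: lin_mk mk_mult mk_trace)

theorem proposition2p7:
  fixes m n :: int and s y :: complex
  assumes "m * n \<noteq> 0"
    and "s \<noteq> 0" and "y \<noteq> 2"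
    and rep: "zpow (rhoW m s y) n ** rhoA s = rhoB s y ** zpow (rhoW m s y) n"
  shows "trace (rhoLambda m n s y) =
     2 - (s + inverse s)^2 * (y - 2)^2 * (chebS (m - 1) y)^2 /
         (2 - s^2 - inverse (s^2) + (y - s^2 - inverse (s^2)) * (y - 2) * (chebS (m - 1) y)^2)"
proof -
  define t where "t = inverse s"
  have st: "s * t = 1" using assms(2) by (simp add: t_def)
  have ts: "t * s = 1" using st by (simp add: mult.commute)
  define S where "S = chebS (m - 1) y"
  define R where "R = chebS (m - 2) y"
  have C: "S^2 - y * S * R + R^2 = 1" using chebS_cassini[of "m - 1" y] by (simp add: S_def R_def)
  have A: "rhoA s = mk s 1 0 t" by (simp add: rhoA_def mk_def t_def)
  have B: "rhoB s y = mk s 0 (2 - y) t" by (simp add: rhoB_def mk_def t_def)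
  have iA: "matrix_inv (rhoA s) = mk t (-1) 0 s" unfolding A using mk_inv[of s t 1 0] st by simp
  have iB: "matrix_inv (rhoB s y) = mk t 0 (y - 2) s" unfolding B
    using mk_inv[of s t 0 "2 - y"] st by simp
  define X where "X = mk 1 (-s) ((2-y) * t) (y-1)"
  define Y where "Y = mk 1 t ((y-2) * s) (y-1)"
  define Xp where "Xp = mk (y-1) s ((y-2) * t) 1"
  define Yp where "Yp = mk (y-1) (-t) ((2-y) * s) 1"
  have eX: "rhoB s y ** matrix_inv (rhoA s) = X" unfolding B iA X_def mk_mult mk_eq_iff
    using st ts by (simp add: algebra_simps)
  have eY: "matrix_inv (rhoB s y) ** rhoA s = Y" unfolding A iB Y_def mk_mult mk_eq_iff
    using st ts by (simp add: algebra_simps)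
  have eXp: "rhoA s ** matrix_inv (rhoB s y) = Xp" unfolding A iB Xp_def mk_mult mk_eq_iff
    using st ts by (simp add: algebra_simps)
  have eYp: "matrix_inv (rhoA s) ** rhoB s y = Yp" unfolding B iA Yp_def mk_mult mk_eq_iff
    using st ts by (simp add: algebra_simps)
  have dX: "det X = 1" "trace X = y" unfolding X_def mk_det mk_trace using st by (algebra, simp)
  have dY: "det Y = 1" "trace Y = y" unfolding Y_def mk_det mk_trace using st by (algebra, simp)
  have dXp: "det Xp = 1" "trace Xp = y" unfolding Xp_def mk_det mk_trace using st by (algebra, simp)
  have dYp: "det Yp = 1" "trace Yp = y" unfolding Yp_def mk_det mk_trace using st by (algebra, simp)
  define p where "p = (R^2 + (-2) * S * R + S^2 + (2) * s^2 * S^2 - s^2 * y * S^2)"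
  define q where "q = (-t * S * R + t * S^2 + s * S * R + s * S^2 - s * y * S^2)"
  define r where "r = ((-2) * t * S * R + (2) * t * S^2 + t * y * S * R - t * y * S^2 + (2) * s * S * R + (2) * s * S^2 - s * y * S * R + (-3) * s * y * S^2 + s * y^2 * S^2)"
  define w where "w = (R^2 + (2) * S * R + S^2 + (-2) * y * S * R + (-2) * y * S^2 + y^2 * S^2 + (2) * t^2 * S^2 - t^2 * y * S^2)"
  define p' where "p' = (R^2 + (2) * S * R + S^2 + (-2) * y * S * R + (-2) * y * S^2 + y^2 * S^2 + (2) * s^2 * S^2 - s^2 * y * S^2)"
  define q' where "q' = (t * S * R + t * S^2 - t * y * S^2 - s * S * R + s * S^2)"
  define r' where "r' = ((2) * t * S * R + (2) * t * S^2 - t * y * S * R + (-3) * t * y * S^2 + t * y^2 * S^2 + (-2) * s * S * R + (2) * s * S^2 + s * y * S * R - s * y * S^2)"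
  define w' where "w' = (R^2 + (-2) * S * R + S^2 + (2) * t^2 * S^2 - t^2 * y * S^2)"
  note al = alg[OF st C p_def q_def r_def w_def p'_def q'_def r'_def w'_def]
  have W: "rhoW m s y = mk p q r w"
  proof -
    have "rhoW m s y = lin S R X ** lin S R Y"
      unfolding rhoW_def eX eY zpow_cheb[OF dX(1)] zpow_cheb[OF dY(1)] dX(2) dY(2) S_def R_def
      by simp
    also have "\<dots> = mk p q r w"
      unfolding X_def Y_def lin_mk mk_mult mk_eq_iff p_def q_def r_def w_def
      by (intro conjI; simp add: algebra_simps power2_eq_square)
    finally show ?thesis .
  qed
  have Wr: "rhoWrev m s y = mk p' q' r' w'"
  proof -
    have "rhoWrev m s y = lin S R Xp ** lin S R Yp"
      unfolding rhoWrev_def eXp eYp zpow_cheb[OF dXp(1)] zpow_cheb[OF dYp(1)] dXp(2) dYp(2) S_def R_def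
      by simp
    also have "\<dots> = mk p' q' r' w'"
      unfolding Xp_def Yp_def lin_mk mk_mult mk_eq_iff p'_def q'_def r'_def w'_def
      by (intro conjI; simp add: algebra_simps power2_eq_square)
    finally show ?thesis .
  qed
  have dW: "det (rhoW m s y) = 1"
  proof -
    have "rhoW m s y = lin S R X ** lin S R Y"
      unfolding rhoW_def eX eY zpow_cheb[OF dX(1)] zpow_cheb[OF dY(1)] dX(2) dY(2) S_def R_def
      by simp
    then show ?thesis using C by (simp add: det_mul det_lin dX dY algebra_simps)
  qed
  have dWr: "det (rhoWrev m s y) = 1"
  proof -
    have "rhoWrev m s y = lin S R Xp ** lin S R Yp"
      unfolding rhoWrev_def eXp eYp zpow_cheb[OF dXp(1)] zpow_cheb[OF dYp(1)] dXp(2) dYp(2) S_def R_def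
      by simp
    then show ?thesis using C by (simp add: det_mul det_lin dXp dYp algebra_simps)
  qed
  define z where "z = p + w"
  have tW: "trace (rhoW m s y) = z" by (simp add: W mk_trace z_def)
  have tWr: "trace (rhoWrev m s y) = z" using al(3) by (simp add: Wr mk_trace z_def)
  define a where "a = chebS (n - 1) z"
  define b where "b = chebS (n - 2) z"
  have Ca: "a^2 - z * a * b + b^2 = 1" using chebS_cassini[of "n - 1" z] by (simp add: a_def b_def)
  have zW: "zpow (rhoW m s y) n = lin a b (mk p q r w)"
    using zpow_cheb[OF dW, of n] by (simp add: W mk_trace z_def a_def b_def)
  have zWr: "zpow (rhoWrev m s y) n = lin a b (mk p' q' r' w')"
    using zpow_cheb[OF dWr, of n] al(3) by (simp add: Wr mk_trace z_def a_def b_def)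
  define e where "e = p + q * (t - s)"
  have be: "b = a * e"
  proof -
    have "(zpow (rhoW m s y) n ** rhoA s) $ 1 $ 2 = (rhoB s y ** zpow (rhoW m s y) n) $ 1 $ 2"
      using rep by simp
    then have "(a * p - b) + a * q * t = s * (a * q)" by (simp add: zW A B lin_mk mk_mult)
    then show ?thesis unfolding e_def by (simp add: algebra_simps)
  qed
  define u where "u = s^2 + t^2"
  define K where "K = (y - u) * S^2"
  define D where "D = 2 - u + (y - u) * (y - 2) * S^2"
  define N where "N = (s + t)^2 * (y - 2)^2 * S^2"
  have e_red: "e = 1 + (u - y) * S * (S - R)" using al(1) by (simp add: e_def u_def)
  have z_red: "z = 2 + (y-2) * (y - u) * S^2" using al(2) by (simp add: z_def u_def)
  have T_red: "p' * p + q' * r + r' * q + w' * w = 2 - K * N"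
  proof -
    have "(s+t)^2 = u + 2" using st by (simp add: u_def power2_eq_square algebra_simps)
    then show ?thesis using al(4) by (simp add: K_def N_def u_def algebra_simps)
  qed
  have h1: "1 - z * e + e^2 = K * D"
    unfolding e_red z_red K_def D_def using C by algebra
  have h2: "a^2 * (1 - z * e + e^2) = 1" using Ca unfolding be by (simp add: algebra_simps power2_eq_square)
  have aKD: "a^2 * K * D = 1" using h1 h2 by (simp add: algebra_simps)
  have Dnz: "D \<noteq> 0" using aKD by auto
  have tr: "trace (rhoLambda m n s y) = a^2 * (p' * p + q' * r + r' * q + w' * w) - 2 * a * b * z + 2 * b^2"
  proof -
    have w'eq: "w' = p + w - p'" using al(3) by (simp add: algebra_simps)
    show ?thesis
      unfolding rhoLambda_def zW zWr trace_lin z_def w'eq by (simp add: algebra_simps power2_eq_square)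
  qed
  have "trace (rhoLambda m n s y) = 2 - a^2 * K * N"
    unfolding tr T_red be using h2 by algebra
  also have "\<dots> = 2 - N / D" using aKD Dnz by (simp add: field_simps)
  also have "N / D = (s + inverse s)^2 * (y - 2)^2 * (chebS (m - 1) y)^2 /
         (2 - s^2 - inverse (s^2) + (y - s^2 - inverse (s^2)) * (y - 2) * (chebS (m - 1) y)^2)"
    by (simp add: N_def D_def u_def t_def S_def power_inverse algebra_simps)
  finally show ?thesis .
qed


end
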